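(* Let $n\geq 6$ be an integer. Then for every real $x\in[3,n/2]$, $$n\frac{\sin(\pi x/n)}{\sin(\pi/n)}\geq x(n-x)+1.$$ *)

theory Defs
  imports Complex_Main
begin

end

theory Submission
  imports Defs "HOL-Analysis.Complex_Transcendental"
begin

lemma sin_cubic_lb:
  fixes y :: real
  shows "sin y \<ge> y - \<bar>y\<bar> ^ 3 / 6"
proof -
  have "\<bar>sin y - (\<Sum>m<3. sin_coeff m * y ^ m)\<bar> \<le> inverse (fact 3) * \<bar>y\<bar> ^ 3"
    by (rule Maclaurin_sin_bound)
  moreover have "(\<Sum>m<3. sin_coeff m * y ^ m) = y"
    by (simp add: eval_nat_numeral sin_coeff_def)
  moreover have "(fact 3 :: real) = 6" by (simp add: eval_nat_numeral)
  ultimately have "\<bar>sin y - y\<bar> \<le> \<bar>y\<bar> ^ 3 / 6" by simp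
  thus ?thesis by (smt (verit))
qed

theorem lemma5p1:
  fixes n :: nat and x :: real
  assumes "n \<ge> 6" and "3 \<le> x" and "x \<le> real n / 2"
  shows "real n * (sin (pi * x / real n) / sin (pi / real n)) \<ge> x * (real n - x) + 1"
proof -
  define N where "N = real n"
  have N6: "N \<ge> 6" using assms(1) unfolding N_def by simp
  have xN: "x \<le> N / 2" using assms(3) unfolding N_def by simp
  have pi32: "pi \<le> 3.2" using pi_approx by simp
  define s where "s = sin (pi / N)"
  have s_pos: "s > 0" unfolding s_def
    using N6 pi_gt3 by (intro sin_gt_zero) (auto simp: field_simps)
  have s_le: "s \<le> pi / N" unfolding s_def
    using sin_x_le_x[of "pi / N"] N6 by simp
  define A where "A = x * (N - x) + 1"
  have A_pos: "A > 0" unfolding A_def using assms(2) xN by (auto intro!: add_nonneg_pos mult_nonneg_nonneg)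
  define y where "y = pi * x / N"
  have y_nn: "y \<ge> 0" unfolding y_def using assms(2) N6 by simp
  have sy: "sin y \<ge> y - y ^ 3 / 6" using sin_cubic_lb[of y] y_nn by simp
  have x2: "x\<^sup>2 \<ge> 9"
  proof -
    have "3 * 3 \<le> x * x" using assms(2) by (intro mult_mono) auto
    thus ?thesis by (simp add: power2_eq_square)
  qed
  have key: "N * (x\<^sup>2 - 1) \<ge> pi\<^sup>2 * x ^ 3 / 6"
  proof -
    have "x ^ 3 \<le> x\<^sup>2 * (N / 2)"
      using xN assms(2) by (simp add: power3_eq_cube power2_eq_square mult_left_mono)
    hence "pi\<^sup>2 * x ^ 3 / 6 \<le> pi\<^sup>2 * (x\<^sup>2 * (N / 2)) / 6"
      by (simp add: divide_right_mono mult_left_mono)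
    also have "\<dots> \<le> 3.2\<^sup>2 * (x\<^sup>2 * (N / 2)) / 6"
      using pi32 pi_gt_zero N6
      by (intro divide_right_mono mult_right_mono power_mono) auto
    also have "\<dots> \<le> N * (x\<^sup>2 - 1)"
    proof -
      have "N * (x\<^sup>2 - 1) - 3.2\<^sup>2 * (x\<^sup>2 * (N / 2)) / 6 = N * ((1 - 3.2\<^sup>2/12) * x\<^sup>2 - 1)"
        by (simp add: algebra_simps)
      moreover have "(1 - 3.2\<^sup>2/12) * x\<^sup>2 - 1 \<ge> 0" using x2 by (simp add: power2_eq_square)
      ultimately show ?thesis using N6 by (smt (verit) mult_nonneg_nonneg)
    qed
    finally show ?thesis .
  qed
  have "A * s \<le> A * (pi / N)" using s_le A_pos by (intro mult_left_mono) auto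
  also have "\<dots> \<le> N * (y - y ^ 3 / 6)"
  proof -
    have "N * (y - y ^ 3 / 6) - A * (pi / N) = (pi / N) * (N * (x\<^sup>2 - 1) - pi\<^sup>2 * x ^ 3 / 6) / N"
      unfolding A_def y_def using N6
      by (simp add: field_simps power2_eq_square power3_eq_cube)
    moreover have "(pi / N) * (N * (x\<^sup>2 - 1) - pi\<^sup>2 * x ^ 3 / 6) / N \<ge> 0"
      using key N6 pi_gt_zero by simp
    ultimately show ?thesis by linarith
  qed
  also have "\<dots> \<le> N * sin y" using sy N6 by simp
  finally have "A * s \<le> N * sin y" .
  hence "A \<le> N * (sin y / s)" using s_pos by (simp add: field_simps)
  thus ?thesis unfolding A_def N_def y_def s_def by simp
qed

end
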